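(* Let $b_i,b_j\in\mathbb{Z}^2$ be linearly independent and lie in the interiors of opposite quadrants of $\mathbb{Z}^2$, let $\mathcal{B}[i,j]$ be the $2\times2$ matrix with rows $b_i,b_j$, and $c[i,j]=(c_i,c_j)\in\mathbb{C}^2$. Then the space of Puiseux polynomial solutions of $\mathrm{Horn}(\mathcal{B}[i,j],c[i,j])$ has dimension $\nu_{ij}=\min(|b_{i1}b_{j2}|,|b_{i2}b_{j1}|)$.
   Context: For an integer matrix $\mathcal{B}'$ with rows $b'_k=(b'_{k1},b'_{k2})$ and $c'$ a complex vector, $\mathrm{Horn}(\mathcal{B}',c')=D_2\langle H_1,H_2\rangle$, where $H_r=Q_r-y_rP_r$, $P_r=\prod_{k:b'_{kr}<0}\prod_{l=0}^{|b'_{kr}|-1}(b'_k\cdot\theta_y+c'_k-l)$, $Q_r=\prod_{k:b'_{kr}>0}\prod_{l=0}^{b'_{kr}-1}(b'_k\cdot\theta_y+c'_k-l)$, $b'_k\cdot\theta_y=b'_{k1}y_1\partial_{y_1}+b'_{k2}y_2\partial_{y_2}$; $D_2$ is the Weyl algebra in $y_1,y_2$. A Puiseux polynomial is a finite linear combination of monomials with complex exponents. *)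

theory Defs
  imports Complex_Main "HOL-Library.Function_Algebras"
begin

text \<open>Puiseux polynomials in y1, y2 with complex exponents are represented by their
coefficient functions: f (a1,a2) is the coefficient of y1^a1 y2^a2; a Puiseux polynomial
is such a function with finite support.\<close>

type_synonym puiseux = "complex \<times> complex \<Rightarrow> complex"

definition puiseux_poly :: "puiseux \<Rightarrow> bool" where
  "puiseux_poly f \<longleftrightarrow> finite {a. f a \<noteq> 0}"

text \<open>Euler operators theta_r = y_r d/dy_r and multiplication by y_r.\<close>
definition theta1 :: "puiseux \<Rightarrow> puiseux" where
  "theta1 f = (\<lambda>a. fst a * f a)"
definition theta2 :: "puiseux \<Rightarrow> puiseux" where
  "theta2 f = (\<lambda>a. snd a * f a)"
definition mult_y :: "nat \<Rightarrow> puiseux \<Rightarrow> puiseux" where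
  "mult_y r f = (\<lambda>a. if r = 1 then f (fst a - 1, snd a) else f (fst a, snd a - 1))"

definition lin_op :: "int \<times> int \<Rightarrow> complex \<Rightarrow> nat \<Rightarrow> puiseux \<Rightarrow> puiseux" where
  "lin_op b ck l f = (\<lambda>a. of_int (fst b) * theta1 f a + of_int (snd b) * theta2 f a
                          + (ck - of_nat l) * f a)"

definition comp_ops :: "(puiseux \<Rightarrow> puiseux) list \<Rightarrow> puiseux \<Rightarrow> puiseux" where
  "comp_ops ops = foldr (\<circ>) ops id"

definition col :: "nat \<Rightarrow> int \<times> int \<Rightarrow> int" where
  "col r b = (if r = 1 then fst b else snd b)"

text \<open>Matrix B' given by its list of rows, c' by a list of the same length.\<close>
definition Q_op :: "(int \<times> int) list \<Rightarrow> complex list \<Rightarrow> nat \<Rightarrow> puiseux \<Rightarrow> puiseux" where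
  "Q_op B c r = comp_ops (concat (map (\<lambda>k. map (\<lambda>l. lin_op (B ! k) (c ! k) l)
        [0..<nat (col r (B ! k))]) (filter (\<lambda>k. col r (B ! k) > 0) [0..<length B])))"

definition P_op :: "(int \<times> int) list \<Rightarrow> complex list \<Rightarrow> nat \<Rightarrow> puiseux \<Rightarrow> puiseux" where
  "P_op B c r = comp_ops (concat (map (\<lambda>k. map (\<lambda>l. lin_op (B ! k) (c ! k) l)
        [0..<nat (- col r (B ! k))]) (filter (\<lambda>k. col r (B ! k) < 0) [0..<length B])))"

definition H_op :: "(int \<times> int) list \<Rightarrow> complex list \<Rightarrow> nat \<Rightarrow> puiseux \<Rightarrow> puiseux" where
  "H_op B c r f = (\<lambda>a. Q_op B c r f a - mult_y r (P_op B c r f) a)"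

text \<open>Puiseux polynomial solutions of Horn(B',c') = D_2<H_1,H_2>: annihilated by the
generators (hence by the whole left ideal).\<close>
definition horn_puiseux_solutions :: "(int \<times> int) list \<Rightarrow> complex list \<Rightarrow> puiseux set" where
  "horn_puiseux_solutions B c =
     {f. puiseux_poly f \<and> H_op B c 1 f = (\<lambda>_. 0) \<and> H_op B c 2 f = (\<lambda>_. 0)}"

definition cdim :: "puiseux set \<Rightarrow> nat" where
  "cdim S = vector_space.dim (\<lambda>(z::complex) f. (\<lambda>a. z * f a)) S"

end

theory Submission imports Defs begin

definition ffc :: "complex \<Rightarrow> nat \<Rightarrow> complex" where
  "ffc x n = (\<Prod>l<n. x - of_nat l)"

definition Rel :: "nat \<Rightarrow> nat \<Rightarrow> puiseux \<Rightarrow> bool" where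
  "Rel m n F \<longleftrightarrow> (\<forall>x. ffc (fst x) m * F x
       = ffc (snd x + of_nat n) n * F (fst x - of_nat m, snd x + of_nat n))"

definition emb :: "nat \<times> nat \<Rightarrow> complex \<times> complex" where
  "emb z = (of_nat (fst z), of_nat (snd z))"

definition Gf :: "(nat \<times> nat) set \<Rightarrow> puiseux" where
  "Gf C x = (\<Sum>z\<in>C. if emb z = x then 1 / (fact (fst z) * fact (snd z)) else 0)"

lemma ffc_Suc: "ffc x (Suc n) = ffc x n * (x - of_nat n)"
  by (simp add: ffc_def)

lemma ffc_zero_iff: "ffc x n = 0 \<longleftrightarrow> (\<exists>l<n. x = of_nat l)"
  by (auto simp: ffc_def)

lemma ffc_nat_fact: "n \<le> k \<Longrightarrow> ffc (of_nat k) n * fact (k - n) = fact k"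
proof (induction n)
  case 0 then show ?case by (simp add: ffc_def)
next
  case (Suc n)
  then have "k - n = Suc (k - Suc n)" by simp
  then have "fact (k - n) = (of_nat (k - n) :: complex) * fact (k - Suc n)"
    by (metis fact_Suc)
  moreover have "(of_nat (k - n) :: complex) = of_nat k - of_nat n" using Suc by (simp add: of_nat_diff)
  ultimately have "fact (k - n) = (of_nat k - of_nat n) * (fact (k - Suc n) :: complex)" by simp
  then have "ffc (of_nat k) (Suc n) * fact (k - Suc n) = ffc (of_nat k) n * fact (k - n)"
    by (simp add: ffc_Suc)
  then show ?case using Suc by simp
qed

lemma ffc_nat_eq: "n \<le> k \<Longrightarrow> ffc (of_nat k) n = fact k / fact (k - n)"
  using ffc_nat_fact[of n k] by (simp add: field_simps)

lemma ffc_notNats: "x \<notin> \<nat> \<Longrightarrow> ffc x n \<noteq> 0"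
  by (auto simp: ffc_zero_iff)

lemma ffc_nat_small: "k < n \<Longrightarrow> ffc (of_nat k) n = 0"
  by (auto simp: ffc_zero_iff)

lemma ffc_nat_big: "n \<le> k \<Longrightarrow> ffc (of_nat k) n \<noteq> 0"
  by (auto simp: ffc_zero_iff)

lemma emb_inj[simp]: "emb z = emb z' \<longleftrightarrow> z = z'"
  by (cases z; cases z'; simp add: emb_def)

lemma range_emb: "x \<in> range emb \<longleftrightarrow> fst x \<in> \<nat> \<and> snd x \<in> \<nat>"
proof
  assume "x \<in> range emb" then show "fst x \<in> \<nat> \<and> snd x \<in> \<nat>" by (auto simp: emb_def)
next
  assume "fst x \<in> \<nat> \<and> snd x \<in> \<nat>"
  then obtain a b where "fst x = of_nat a" "snd x = of_nat b" by (auto elim!: Nats_cases)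
  then have "x = emb (a, b)" by (cases x) (simp add: emb_def)
  then show "x \<in> range emb" by blast
qed

lemma Gf_emb: "finite C \<Longrightarrow> Gf C (emb z) = (if z \<in> C then 1 / (fact (fst z) * fact (snd z)) else 0)"
  unfolding Gf_def by (simp add: eq_commute[of z])

lemma Gf_out: "x \<notin> range emb \<Longrightarrow> Gf C x = 0"
  unfolding Gf_def by (rule sum.neutral) auto

lemma Nats_diff_nat: "(u::nat) < m \<Longrightarrow> (of_nat u - of_nat m :: complex) \<notin> \<nat>"
proof
  assume "u < m" "(of_nat u - of_nat m :: complex) \<in> \<nat>"
  then obtain k where "(of_nat u - of_nat m :: complex) = of_nat k" by (auto elim!: Nats_cases)
  then have "(of_nat u :: complex) = of_nat (k + m)" by (simp add: algebra_simps)
  then have "u = k + m" using of_nat_eq_iff by blast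
  then show False using \<open>u < m\<close> by simp
qed

lemma Rel_Gf:
  assumes fin: "finite C"
    and cl: "\<And>z. m \<le> fst z \<Longrightarrow> (z \<in> C \<longleftrightarrow> (fst z - m, snd z + n) \<in> C)"
  shows "Rel m n (Gf C)"
  unfolding Rel_def
proof
  fix x :: "complex \<times> complex"
  let ?y = "(fst x - of_nat m, snd x + of_nat n)"
  show "ffc (fst x) m * Gf C x = ffc (snd x + of_nat n) n * Gf C ?y"
  proof (cases "x \<in> range emb")
    case True
    then obtain u v where x: "x = emb (u, v)" by auto
    show ?thesis
    proof (cases "m \<le> u")
      case True
      have y: "?y = emb (u - m, v + n)" using True by (simp add: x emb_def of_nat_diff)
      have mem: "(u, v) \<in> C \<longleftrightarrow> (u - m, v + n) \<in> C" using cl[of "(u,v)"] True by simp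
      have f1: "ffc (of_nat u) m = fact u / fact (u - m)" using True by (rule ffc_nat_eq)
      have f2: "ffc (of_nat (v + n)) n = fact (v + n) / fact v" using ffc_nat_eq[of n "v+n"] by simp
      have gx: "Gf C x = (if (u,v) \<in> C then 1 / (fact u * fact v) else 0)"
        unfolding x by (simp add: Gf_emb[OF fin])
      have gy: "Gf C ?y = (if (u,v) \<in> C then 1 / (fact (u - m) * fact (v + n)) else 0)"
        unfolding y using mem by (simp add: Gf_emb[OF fin])
      have fx: "fst x = of_nat u" "snd x = of_nat v" by (simp_all add: x emb_def)
      show ?thesis unfolding gx gy unfolding fx using f1 f2
        by (simp add: field_simps)
    next
      case False
      have "?y \<notin> range emb" unfolding range_emb using Nats_diff_nat[of u m] False by (simp add: x emb_def)
      then show ?thesis using False by (simp add: Gf_out x emb_def ffc_nat_small)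
    qed
  next
    case False
    show ?thesis
    proof (cases "?y \<in> range emb")
      case True
      then obtain a b where y: "?y = emb (a, b)" by (metis rangeE surj_pair)
      then have x1: "fst x = of_nat a + of_nat m" and x2: "snd x = of_nat b - of_nat n"
        by (auto simp: emb_def algebra_simps)
      have "b < n"
      proof (rule ccontr)
        assume "\<not> b < n"
        then have "x = emb (a + m, b - n)" using x1 x2 by (cases x) (simp add: emb_def of_nat_diff)
        then show False using False by blast
      qed
      then have "ffc (snd x + of_nat n) n = 0" using x2 by (simp add: ffc_nat_small)
      then show ?thesis using False by (simp add: Gf_out)
    next
      case False2: False
      then show ?thesis using False by (simp add: Gf_out)
    qed
  qed
qed


definition nxt :: "nat \<Rightarrow> nat \<Rightarrow> nat \<Rightarrow> nat \<Rightarrow> nat \<times> nat \<Rightarrow> nat \<times> nat" where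
  "nxt p r q s z = (if s \<le> snd z then (fst z + q, snd z - s)
      else if p \<le> fst z then (fst z - p, snd z + r) else z)"

definition Eg :: "nat \<Rightarrow> nat \<Rightarrow> nat \<Rightarrow> nat \<Rightarrow> ((nat \<times> nat) \<times> (nat \<times> nat)) set" where
  "Eg p r q s = {(z, z'). (p \<le> fst z \<and> z' = (fst z - p, snd z + r)) \<or> (p \<le> fst z' \<and> z = (fst z' - p, snd z' + r))
     \<or> (q \<le> fst z \<and> z' = (fst z - q, snd z + s)) \<or> (q \<le> fst z' \<and> z = (fst z' - q, snd z' + s))}"

definition compo :: "nat \<Rightarrow> nat \<Rightarrow> nat \<Rightarrow> nat \<Rightarrow> nat \<times> nat \<Rightarrow> (nat \<times> nat) set" where
  "compo p r q s b = {z. (b, z) \<in> (Eg p r q s)\<^sup>*}"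

lemma compo_closed1:
  assumes "p \<le> fst z" shows "z \<in> compo p r q s b \<longleftrightarrow> (fst z - p, snd z + r) \<in> compo p r q s b"
proof -
  have "(z, (fst z - p, snd z + r)) \<in> Eg p r q s" "((fst z - p, snd z + r), z) \<in> Eg p r q s"
    using assms by (auto simp: Eg_def)
  then show ?thesis unfolding compo_def by (auto intro: rtrancl_into_rtrancl)
qed

lemma compo_closed2:
  assumes "q \<le> fst z" shows "z \<in> compo p r q s b \<longleftrightarrow> (fst z - q, snd z + s) \<in> compo p r q s b"
proof -
  have "(z, (fst z - q, snd z + s)) \<in> Eg p r q s" "((fst z - q, snd z + s), z) \<in> Eg p r q s"
    using assms by (auto simp: Eg_def)
  then show ?thesis unfolding compo_def by (auto intro: rtrancl_into_rtrancl)
qed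

lemma compo_self: "b \<in> compo p r q s b"
  by (simp add: compo_def)

context
  fixes p r q s :: nat
  assumes pp: "p > 0" and rp: "r > 0" and qp: "q > 0" and sp: "s > 0" and D: "p * s < q * r"
begin

definition joinable :: "nat \<times> nat \<Rightarrow> nat \<times> nat \<Rightarrow> bool" where
  "joinable x y \<longleftrightarrow> (\<exists>j k. (nxt p r q s ^^ j) x = (nxt p r q s ^^ k) y)"

lemma box_fix: "fst b < p \<Longrightarrow> snd b < s \<Longrightarrow> (nxt p r q s ^^ k) b = b"
  by (induction k) (auto simp: nxt_def)

lemma joinable_sym: "joinable x y \<Longrightarrow> joinable y x"
  unfolding joinable_def by metis

lemma joinable_step: "joinable (nxt p r q s x) (nxt p r q s y) \<Longrightarrow> joinable x y"
  unfolding joinable_def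
proof (elim exE)
  fix j k assume "(nxt p r q s ^^ j) (nxt p r q s x) = (nxt p r q s ^^ k) (nxt p r q s y)"
  then have "(nxt p r q s ^^ Suc j) x = (nxt p r q s ^^ Suc k) y" by (simp add: funpow_Suc_right del: funpow.simps)
  then show "\<exists>j k. (nxt p r q s ^^ j) x = (nxt p r q s ^^ k) y" by blast
qed

lemma join_edgeB: "q \<le> fst z \<Longrightarrow> joinable z (fst z - q, snd z + s)"
proof -
  assume "q \<le> fst z"
  then have "nxt p r q s (fst z - q, snd z + s) = z" by (cases z) (simp add: nxt_def)
  then have "(nxt p r q s ^^ 0) z = (nxt p r q s ^^ 1) (fst z - q, snd z + s)" by simp
  then show ?thesis unfolding joinable_def by blast
qed

lemma join_edgeA: "p \<le> fst z \<Longrightarrow> joinable z (fst z - p, snd z + r)"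
proof (induction "snd z" arbitrary: z rule: less_induct)
  case less
  obtain u v where z: "z = (u, v)" by (cases z)
  show ?case
  proof (cases "s \<le> v")
    case False
    then have "nxt p r q s z = (fst z - p, snd z + r)" using less.prems by (simp add: z nxt_def)
    then have "(nxt p r q s ^^ 1) z = (nxt p r q s ^^ 0) (fst z - p, snd z + r)" by simp
    then show ?thesis unfolding joinable_def by blast
  next
    case True
    have n1: "nxt p r q s z = (u + q, v - s)" using True by (simp add: z nxt_def)
    have n2: "nxt p r q s (fst z - p, snd z + r) = (u + q - p, v - s + r)"
      using True less.prems by (simp add: z nxt_def)
    have "joinable (u + q, v - s) (fst (u + q, v - s) - p, snd (u + q, v - s) + r)"
      using less.hyps[of "(u + q, v - s)"] less.prems True sp by (simp add: z)
    then have "joinable (nxt p r q s z) (nxt p r q s (fst z - p, snd z + r))"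
      unfolding n1 n2 by simp
    then show ?thesis by (rule joinable_step)
  qed
qed

lemma reach_join:
  assumes "joinable x y" "(nxt p r q s ^^ i) x = b" "fst b < p" "snd b < s"
  shows "\<exists>k. (nxt p r q s ^^ k) y = b"
proof -
  obtain j k where jk: "(nxt p r q s ^^ j) x = (nxt p r q s ^^ k) y" using assms(1) joinable_def by blast
  have "(nxt p r q s ^^ (j + i)) x = b"
    using assms box_fix[of b j] by (simp add: funpow_add)
  then have "(nxt p r q s ^^ (i + j)) x = b" by (simp add: add.commute)
  moreover have "(nxt p r q s ^^ (i + j)) x = (nxt p r q s ^^ (i + k)) y"
    using jk by (simp add: funpow_add)
  ultimately have "(nxt p r q s ^^ (i + k)) y = b" by simp
  then show ?thesis by blast
qed

lemma compo_reach:
  assumes "z \<in> compo p r q s b" "fst b < p" "snd b < s"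
  shows "\<exists>k. (nxt p r q s ^^ k) z = b"
proof -
  have "(b, z) \<in> (Eg p r q s)\<^sup>*" using assms(1) by (simp add: compo_def)
  then show ?thesis
  proof (induction rule: rtrancl_induct)
    case base
    have "(nxt p r q s ^^ 0) b = b" by simp
    then show ?case by blast
  next
    case (step y z)
    then obtain i where i: "(nxt p r q s ^^ i) y = b" by blast
    have "joinable y z"
      using step.hyps(2) unfolding Eg_def
    proof (elim CollectE case_prodE disjE conjE)
      fix a b assume "(y, z) = (a, b)" "p \<le> fst a" "b = (fst a - p, snd a + r)"
      then show ?thesis using join_edgeA[of y] by simp
    next
      fix a b assume "(y, z) = (a, b)" "p \<le> fst b" "a = (fst b - p, snd b + r)"
      then show ?thesis using join_edgeA[of z] joinable_sym by simp
    next
      fix a b assume "(y, z) = (a, b)" "q \<le> fst a" "b = (fst a - q, snd a + s)"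
      then show ?thesis using join_edgeB[of y] by simp
    next
      fix a b assume "(y, z) = (a, b)" "q \<le> fst b" "a = (fst b - q, snd b + s)"
      then show ?thesis using join_edgeB[of z] joinable_sym by simp
    qed
    then show ?case using reach_join i assms(2,3) by blast
  qed
qed

definition phi :: "nat \<times> nat \<Rightarrow> nat" where
  "phi z = s * fst z + q * snd z"

lemma phi_nxt: "phi z \<le> phi (nxt p r q s z)"
proof -
  obtain u v where z: "z = (u, v)" by (cases z)
  show ?thesis
  proof (cases "s \<le> v")
    case True
    obtain w where "v = s + w" using True le_Suc_ex by blast
    then have "s * (u + q) + q * (v - s) = s * u + q * v"
      by (simp add: algebra_simps)
    then show ?thesis using True by (simp add: z nxt_def phi_def)
  next
    case False
    show ?thesis
    proof (cases "p \<le> u")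
      case True
      obtain w where w: "u = p + w" using True le_Suc_ex by blast
      have "s * u + q * v \<le> s * (u - p) + q * (v + r)"
        using D by (simp add: w algebra_simps mult.commute)
      then show ?thesis using True False by (simp add: z nxt_def phi_def)
    next
      case False2: False
      then show ?thesis using False by (simp add: z nxt_def phi_def)
    qed
  qed
qed

lemma phi_pow: "phi z \<le> phi ((nxt p r q s ^^ k) z)"
proof (induction k)
  case 0 then show ?case by simp
next
  case (Suc k) then show ?case using phi_nxt[of "(nxt p r q s ^^ k) z"] by simp
qed

lemma compo_finite:
  assumes "fst b < p" "snd b < s" shows "finite (compo p r q s b)"
proof -
  have "compo p r q s b \<subseteq> {..phi b} \<times> {..phi b}"
  proof
    fix z assume "z \<in> compo p r q s b"
    then obtain k where "(nxt p r q s ^^ k) z = b" using compo_reach assms by blast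
    then have le: "phi z \<le> phi b" using phi_pow[of z k] by simp
    have "fst z \<le> phi z" "snd z \<le> phi z" using sp qp by (auto simp: phi_def intro: trans_le_add1 trans_le_add2)
    then show "z \<in> {..phi b} \<times> {..phi b}" using le by (cases z) auto
  qed
  then show ?thesis by (rule finite_subset) auto
qed

lemma compo_box:
  assumes "fst b < p" "snd b < s" "fst b' < p" "snd b' < s" "b' \<in> compo p r q s b"
  shows "b' = b"
proof -
  obtain k where "(nxt p r q s ^^ k) b' = b" using compo_reach assms by blast
  then show ?thesis using box_fix[of b' k] assms by simp
qed


lemma infinite_chain:
  assumes "inj (seq :: nat \<Rightarrow> complex \<times> complex)" "\<And>k. F (seq k) \<noteq> 0" "puiseux_poly F"
  shows False
proof -
  have "range seq \<subseteq> {a. F a \<noteq> 0}" using assms(2) by auto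
  then have "finite (range seq)" using assms(3) unfolding puiseux_poly_def by (rule finite_subset)
  then show False using assms(1) finite_imageD by blast
qed

lemma supp_emb:
  assumes fin: "puiseux_poly F" and R1: "Rel p r F" and R2: "Rel q s F" and nz: "F x \<noteq> 0"
  shows "x \<in> range emb"
proof (rule ccontr)
  assume "x \<notin> range emb"
  then consider "fst x \<notin> \<nat>" | "snd x \<notin> \<nat>" unfolding range_emb by blast
  then show False
  proof cases
    case 1
    define seq where "seq k = (fst x - of_nat (k * p), snd x + of_nat (k * r))" for k
    have notN: "fst (seq k) \<notin> \<nat>" for k
    proof
      assume "fst (seq k) \<in> \<nat>"
      then have "fst (seq k) + of_nat (k * p) \<in> \<nat>" by (intro Nats_add) auto
      then show False using 1 by (simp add: seq_def)
    qed
    have nzk: "F (seq k) \<noteq> 0" for k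
    proof (induction k)
      case 0 then show ?case using nz by (simp add: seq_def)
    next
      case (Suc k)
      have "ffc (fst (seq k)) p * F (seq k) = ffc (snd (seq k) + of_nat r) r * F (fst (seq k) - of_nat p, snd (seq k) + of_nat r)"
        using R1 unfolding Rel_def by blast
      moreover have "(fst (seq k) - of_nat p, snd (seq k) + of_nat r) = seq (Suc k)"
        by (simp add: seq_def algebra_simps)
      ultimately show ?case using Suc ffc_notNats[OF notN[of k]] by auto
    qed
    have "inj seq"
    proof (rule injI)
      fix a b assume "seq a = seq b"
      then have "(of_nat (a * p) :: complex) = of_nat (b * p)" by (simp add: seq_def)
      then have "a * p = b * p" using of_nat_eq_iff by blast
      then show "a = b" using pp by simp
    qed
    then show False using infinite_chain nzk fin by blast
  next
    case 2
    define seq where "seq k = (fst x + of_nat (k * q), snd x - of_nat (k * s))" for k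
    have notN: "snd (seq k) \<notin> \<nat>" for k
    proof
      assume "snd (seq k) \<in> \<nat>"
      then have "snd (seq k) + of_nat (k * s) \<in> \<nat>" by (intro Nats_add) auto
      then show False using 2 by (simp add: seq_def)
    qed
    have nzk: "F (seq k) \<noteq> 0" for k
    proof (induction k)
      case 0 then show ?case using nz by (simp add: seq_def)
    next
      case (Suc k)
      have "ffc (fst (seq (Suc k))) q * F (seq (Suc k)) = ffc (snd (seq (Suc k)) + of_nat s) s * F (fst (seq (Suc k)) - of_nat q, snd (seq (Suc k)) + of_nat s)"
        using R2 unfolding Rel_def by blast
      moreover have "(fst (seq (Suc k)) - of_nat q, snd (seq (Suc k)) + of_nat s) = seq k"
        by (simp add: seq_def algebra_simps)
      moreover have "snd (seq (Suc k)) + of_nat s = snd (seq k)"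
        by (simp add: seq_def algebra_simps)
      ultimately show ?case using Suc ffc_notNats[OF notN[of k]] by auto
    qed
    have "inj seq"
    proof (rule injI)
      fix a b assume "seq a = seq b"
      then have "(of_nat (a * s) :: complex) = of_nat (b * s)" by (simp add: seq_def)
      then have "a * s = b * s" using of_nat_eq_iff by blast
      then show "a = b" using sp by simp
    qed
    then show False using infinite_chain nzk fin by blast
  qed
qed

lemma unique0:
  assumes fin: "puiseux_poly F" and R1: "Rel p r F" and R2: "Rel q s F"
    and box0: "\<And>u v. u < p \<Longrightarrow> v < s \<Longrightarrow> F (emb (u, v)) = 0"
  shows "F = (\<lambda>_. 0)"
proof -
  define Sup where "Sup = {z. F (emb z) \<noteq> 0}"
  have finS: "finite Sup"
  proof -
    have "Sup = emb -` {a. F a \<noteq> 0}" by (auto simp: Sup_def)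
    moreover have "inj emb" by (rule injI) simp
    moreover have "finite {a. F a \<noteq> 0}" using fin unfolding puiseux_poly_def .
    ultimately show ?thesis using finite_vimageI by metis
  qed
  have "Sup = {}"
  proof (rule ccontr)
    assume ne: "Sup \<noteq> {}"
    define M where "M = Max (phi ` Sup)"
    define S' where "S' = {z \<in> Sup. phi z = M}"
    have finS': "finite S'" using finS by (simp add: S'_def)
    have "M \<in> phi ` Sup" unfolding M_def using finS ne by (intro Max_in) auto
    then have neS': "S' \<noteq> {}" by (auto simp: S'_def)
    define U where "U = Max (fst ` S')"
    have "U \<in> fst ` S'" unfolding U_def using finS' neS' by (intro Max_in) auto
    then obtain u v where z0: "(u, v) \<in> S'" "u = U" by force
    have inS: "(u, v) \<in> Sup" and phM: "phi (u, v) = M" using z0 by (auto simp: S'_def)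
    have Fz: "F (emb (u, v)) \<noteq> 0" using inS by (simp add: Sup_def)
    have maxphi: "phi z \<le> M" if "z \<in> Sup" for z unfolding M_def using finS that by (intro Max_ge) auto
    have maxU: "fst z \<le> U" if "z \<in> S'" for z unfolding U_def using finS' that by (intro Max_ge) auto
    consider "p \<le> u" | "s \<le> v" | "u < p" "v < s" by linarith
    then show False
    proof cases
      case 1
      have "ffc (fst (emb (u,v))) p * F (emb (u,v)) = ffc (snd (emb (u,v)) + of_nat r) r * F (fst (emb (u,v)) - of_nat p, snd (emb (u,v)) + of_nat r)"
        using R1 unfolding Rel_def by blast
      moreover have "(fst (emb (u,v)) - of_nat p, snd (emb (u,v)) + of_nat r) = emb (u - p, v + r)"
        using 1 by (simp add: emb_def of_nat_diff)
      moreover have "ffc (fst (emb (u,v))) p \<noteq> 0" using 1 by (simp add: emb_def ffc_nat_big)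
      ultimately have "F (emb (u - p, v + r)) \<noteq> 0" using Fz by auto
      then have "(u - p, v + r) \<in> Sup" by (simp add: Sup_def)
      then have "phi (u - p, v + r) \<le> M" by (rule maxphi)
      moreover have "phi (u, v) < phi (u - p, v + r)"
      proof -
        obtain w where w: "u = p + w" using 1 le_Suc_ex by blast
        show ?thesis using D by (simp add: phi_def w algebra_simps mult.commute)
      qed
      ultimately show False using phM by simp
    next
      case 2
      have "ffc (fst (emb (u + q, v - s))) q * F (emb (u + q, v - s)) = ffc (snd (emb (u + q, v - s)) + of_nat s) s * F (fst (emb (u + q, v - s)) - of_nat q, snd (emb (u + q, v - s)) + of_nat s)"
        using R2 unfolding Rel_def by blast
      moreover have "(fst (emb (u + q, v - s)) - of_nat q, snd (emb (u + q, v - s)) + of_nat s) = emb (u, v)"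
        using 2 by (simp add: emb_def of_nat_diff)
      moreover have "snd (emb (u + q, v - s)) + of_nat s = of_nat v"
        using 2 by (simp add: emb_def of_nat_diff)
      moreover have "ffc (of_nat v) s \<noteq> 0" using 2 by (simp add: ffc_nat_big)
      ultimately have "F (emb (u + q, v - s)) \<noteq> 0" using Fz by auto
      then have "(u + q, v - s) \<in> Sup" by (simp add: Sup_def)
      moreover have "phi (u + q, v - s) = phi (u, v)"
      proof -
        obtain w where w: "v = s + w" using 2 le_Suc_ex by blast
        show ?thesis by (simp add: phi_def w algebra_simps)
      qed
      ultimately have "(u + q, v - s) \<in> S'" using phM by (simp add: S'_def)
      then have "u + q \<le> U" using maxU by fastforce
      then show False using z0 qp by simp
    next
      case 3
      then show False using box0 Fz by blast
    qed
  qed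
  show ?thesis
  proof
    fix x
    show "F x = 0"
    proof (cases "x \<in> range emb")
      case True
      then obtain z where "x = emb z" by blast
      moreover have "z \<notin> Sup" using \<open>Sup = {}\<close> by simp
      ultimately show ?thesis by (simp add: Sup_def)
    next
      case False
      then show ?thesis using supp_emb[OF fin R1 R2] by blast
    qed
  qed
qed


lemma Gf_poly: "finite C \<Longrightarrow> puiseux_poly (Gf C)"
proof -
  assume fin: "finite C"
  have "{a. Gf C a \<noteq> 0} \<subseteq> emb ` C"
  proof
    fix a assume "a \<in> {a. Gf C a \<noteq> 0}"
    then have "Gf C a \<noteq> 0" by simp
    then obtain z where "z \<in> C" "emb z = a" unfolding Gf_def
      by (metis (mono_tags, lifting) sum.neutral)
    then show "a \<in> emb ` C" by blast
  qed
  then show ?thesis unfolding puiseux_poly_def using fin by (meson finite_imageI finite_subset)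
qed

lemma exist0:
  assumes "fst b < p" "snd b < s"
  shows "puiseux_poly (Gf (compo p r q s b))" "Rel p r (Gf (compo p r q s b))" "Rel q s (Gf (compo p r q s b))"
    "Gf (compo p r q s b) (emb b) \<noteq> 0"
    "\<And>b'. fst b' < p \<Longrightarrow> snd b' < s \<Longrightarrow> b' \<noteq> b \<Longrightarrow> Gf (compo p r q s b) (emb b') = 0"
proof -
  have fin: "finite (compo p r q s b)" using compo_finite assms by blast
  show "puiseux_poly (Gf (compo p r q s b))" using Gf_poly fin by blast
  show "Rel p r (Gf (compo p r q s b))" using Rel_Gf[OF fin] compo_closed1 by blast
  show "Rel q s (Gf (compo p r q s b))" using Rel_Gf[OF fin] compo_closed2 by blast
  show "Gf (compo p r q s b) (emb b) \<noteq> 0" using compo_self by (simp add: Gf_emb[OF fin])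
  fix b' assume "fst b' < p" "snd b' < s" "b' \<noteq> b"
  then have "b' \<notin> compo p r q s b" using compo_box assms by blast
  then show "Gf (compo p r q s b) (emb b') = 0" by (simp add: Gf_emb[OF fin])
qed

end

lemma sum_fun_apply: "(\<Sum>i\<in>I. h i) a = (\<Sum>i\<in>I. h i a)"
  by (induction I rule: infinite_finite_induct) auto

lemma dim_by_eval:
  fixes V :: "puiseux set" and g :: "'i \<Rightarrow> puiseux" and pt :: "'i \<Rightarrow> complex \<times> complex"
  assumes finI: "finite I" and gV: "\<And>i. i \<in> I \<Longrightarrow> g i \<in> V"
    and diag: "\<And>i. i \<in> I \<Longrightarrow> g i (pt i) \<noteq> 0"
    and off: "\<And>i j. i \<in> I \<Longrightarrow> j \<in> I \<Longrightarrow> i \<noteq> j \<Longrightarrow> g i (pt j) = 0"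
    and spn: "\<And>f. f \<in> V \<Longrightarrow> \<exists>c. f = (\<lambda>a. \<Sum>i\<in>I. c i * g i a)"
  shows "cdim V = card I"
proof -
  interpret vs: vector_space "\<lambda>(z::complex) (f::puiseux). (\<lambda>a. z * f a)"
    by unfold_locales (auto simp: fun_eq_iff algebra_simps)
  have injg: "inj_on g I"
  proof (rule inj_onI)
    fix i j assume ij: "i \<in> I" "j \<in> I" "g i = g j"
    show "i = j"
    proof (rule ccontr)
      assume "i \<noteq> j"
      then have "g j (pt i) = 0" using off ij by blast
      then show False using diag[OF ij(1)] ij(3) by simp
    qed
  qed
  have sub: "g ` I \<subseteq> V" using gV by blast
  have spanV: "V \<subseteq> vs.span (g ` I)"
  proof
    fix f assume "f \<in> V"
    then obtain c where c: "f = (\<lambda>a. \<Sum>i\<in>I. c i * g i a)" using spn by blast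
    have "f = (\<Sum>i\<in>I. (\<lambda>a. c i * g i a))" unfolding c by (simp add: fun_eq_iff sum_fun_apply)
    also have "\<dots> \<in> vs.span (g ` I)"
      by (intro vs.span_sum vs.span_scale vs.span_base) auto
    finally show "f \<in> vs.span (g ` I)" .
  qed
  have ind: "vs.independent (g ` I)"
    unfolding vs.dependent_explicit
  proof clarify
    fix t u v
    assume t: "finite t" "t \<subseteq> g ` I" and s0: "(\<Sum>v\<in>t. (\<lambda>a. u v * v a)) = 0" and vt: "v \<in> t" and uv: "u v \<noteq> 0"
    obtain i where i: "i \<in> I" "v = g i" using t vt by blast
    have "(\<Sum>w\<in>t. (\<lambda>a. u w * w a)) (pt i) = 0" using s0 by simp
    then have "(\<Sum>w\<in>t. u w * w (pt i)) = 0" by (simp add: sum_fun_apply)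
    moreover have "(\<Sum>w\<in>t. u w * w (pt i)) = u v * v (pt i) + (\<Sum>w\<in>t - {v}. u w * w (pt i))"
      using t vt by (simp add: sum.remove)
    moreover have "(\<Sum>w\<in>t - {v}. u w * w (pt i)) = 0"
    proof (rule sum.neutral, rule ballI)
      fix w assume "w \<in> t - {v}"
      then obtain j where j: "j \<in> I" "w = g j" "w \<noteq> v" using t by blast
      then have "j \<noteq> i" using i by blast
      then show "u w * w (pt i) = 0" using off j i by simp
    qed
    ultimately have "u v * g i (pt i) = 0" using i by simp
    then show False using uv diag[OF i(1)] by simp
  qed
  have "vs.dim V = card (g ` I)"
    by (rule vs.dim_unique[OF sub spanV ind refl])
  then show ?thesis unfolding cdim_def using card_image[OF injg] by simp
qed


definition dotc :: "int \<times> int \<Rightarrow> complex \<times> complex \<Rightarrow> complex" where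
  "dotc b a = of_int (fst b) * fst a + of_int (snd b) * snd a"

lemma lin_op_eq: "lin_op b ck l f = (\<lambda>a. (dotc b a + ck - of_nat l) * f a)"
  by (simp add: lin_op_def theta1_def theta2_def dotc_def fun_eq_iff algebra_simps)

lemma foldr_comp: "foldr (\<circ>) xs g = foldr (\<circ>) xs id \<circ> g"
  by (induction xs) (auto simp: fun_eq_iff)

lemma comp_lin: "comp_ops (map (\<lambda>l. lin_op b ck l) [0..<n]) f = (\<lambda>a. ffc (dotc b a + ck) n * f a)"
proof (induction n arbitrary: f)
  case 0 then show ?case by (simp add: comp_ops_def ffc_def)
next
  case (Suc n)
  have "comp_ops (map (\<lambda>l. lin_op b ck l) [0..<Suc n]) f
      = comp_ops (map (\<lambda>l. lin_op b ck l) [0..<n]) (lin_op b ck n f)"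
    unfolding comp_ops_def by (simp add: foldr_comp[of _ "lin_op b ck n"])
  also have "\<dots> = (\<lambda>a. ffc (dotc b a + ck) (Suc n) * f a)"
    by (simp add: Suc lin_op_eq ffc_Suc fun_eq_iff algebra_simps)
  finally show ?case .
qed

definition sh :: "nat \<Rightarrow> complex \<times> complex \<Rightarrow> complex \<times> complex" where
  "sh r a = (if r = 1 then (fst a - 1, snd a) else (fst a, snd a - 1))"

lemma H_zero_iff: "H_op B c r f = (\<lambda>_. 0) \<longleftrightarrow> (\<forall>a. Q_op B c r f a = P_op B c r f (sh r a))"
  by (simp add: H_op_def mult_y_def sh_def fun_eq_iff)

lemma upt2: "[0..<length [bi, bj :: int \<times> int]] = [0, 1]"
  by (simp add: upt_rec)

lemma QP_A:
  assumes "col r bi > 0" "col r bj < 0"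
  shows "Q_op [bi, bj] [ci, cj] r f = (\<lambda>a. ffc (dotc bi a + ci) (nat (col r bi)) * f a)"
    "P_op [bi, bj] [ci, cj] r f = (\<lambda>a. ffc (dotc bj a + cj) (nat (- col r bj)) * f a)"
  using assms unfolding Q_op_def P_op_def upt2 by (simp_all add: comp_lin)

lemma QP_B:
  assumes "col r bi < 0" "col r bj > 0"
  shows "Q_op [bi, bj] [ci, cj] r f = (\<lambda>a. ffc (dotc bj a + cj) (nat (col r bj)) * f a)"
    "P_op [bi, bj] [ci, cj] r f = (\<lambda>a. ffc (dotc bi a + ci) (nat (- col r bi)) * f a)"
  using assms unfolding Q_op_def P_op_def upt2 by (simp_all add: comp_lin)

lemma dotc_sh: "r = 1 \<or> r = 2 \<Longrightarrow> dotc b (sh r a) = dotc b a - of_int (col r b)"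
  by (auto simp: dotc_def sh_def col_def algebra_simps)


lemma Rel_diff: "Rel m n F \<Longrightarrow> Rel m n G \<Longrightarrow> Rel m n (\<lambda>x. F x - G x)"
  unfolding Rel_def by (simp add: right_diff_distrib)

lemma Rel_lin:
  assumes "\<And>i. i \<in> I \<Longrightarrow> Rel m n (G i)"
  shows "Rel m n (\<lambda>x. \<Sum>i\<in>I. c i * G i x)"
  unfolding Rel_def
proof
  fix x :: "complex \<times> complex"
  have "ffc (fst x) m * (\<Sum>i\<in>I. c i * G i x) = (\<Sum>i\<in>I. c i * (ffc (fst x) m * G i x))"
    by (simp add: sum_distrib_left mult.left_commute)
  also have "\<dots> = (\<Sum>i\<in>I. c i * (ffc (snd x + of_nat n) n * G i (fst x - of_nat m, snd x + of_nat n)))"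
  proof (rule sum.cong)
    fix i assume "i \<in> I"
    then have "ffc (fst x) m * G i x = ffc (snd x + of_nat n) n * G i (fst x - of_nat m, snd x + of_nat n)"
      using assms[of i] unfolding Rel_def by blast
    then show "c i * (ffc (fst x) m * G i x) = c i * (ffc (snd x + of_nat n) n * G i (fst x - of_nat m, snd x + of_nat n))"
      by simp
  qed simp
  also have "\<dots> = ffc (snd x + of_nat n) n * (\<Sum>i\<in>I. c i * G i (fst x - of_nat m, snd x + of_nat n))"
    by (simp add: sum_distrib_left mult.left_commute)
  finally show "ffc (fst x) m * (\<Sum>i\<in>I. c i * G i x) = ffc (snd x + of_nat n) n * (\<Sum>i\<in>I. c i * G i (fst x - of_nat m, snd x + of_nat n))" .
qed

lemma pp_diff: "puiseux_poly F \<Longrightarrow> puiseux_poly G \<Longrightarrow> puiseux_poly (\<lambda>x. F x - G x)"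
  unfolding puiseux_poly_def
  by (rule finite_subset[of _ "{a. F a \<noteq> 0} \<union> {a. G a \<noteq> 0}"]) auto

lemma pp_lin:
  assumes "finite I" "\<And>i. i \<in> I \<Longrightarrow> puiseux_poly (G i)"
  shows "puiseux_poly (\<lambda>x. \<Sum>i\<in>I. c i * G i x)"
  unfolding puiseux_poly_def
proof (rule finite_subset[of _ "\<Union>i\<in>I. {a. G i a \<noteq> 0}"])
  show "{a. (\<Sum>i\<in>I. c i * G i a) \<noteq> 0} \<subseteq> (\<Union>i\<in>I. {a. G i a \<noteq> 0})"
  proof
    fix a assume "a \<in> {a. (\<Sum>i\<in>I. c i * G i a) \<noteq> 0}"
    then have "(\<Sum>i\<in>I. c i * G i a) \<noteq> 0" by simp
    then obtain i where "i \<in> I" "c i * G i a \<noteq> 0" by (meson sum.neutral)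
    then show "a \<in> (\<Union>i\<in>I. {a. G i a \<noteq> 0})" by auto
  qed
  show "finite (\<Union>i\<in>I. {a. G i a \<noteq> 0})"
    using assms unfolding puiseux_poly_def by blast
qed

lemma pp_comp:
  assumes "\<And>x. Phi (Psi x) = x" "\<And>a. Psi (Phi a) = a"
  shows "puiseux_poly (f \<circ> Psi) \<longleftrightarrow> puiseux_poly f"
proof -
  have e1: "{x. (f \<circ> Psi) x \<noteq> 0} = Phi ` {a. f a \<noteq> 0}"
  proof (rule set_eqI, rule iffI)
    fix x assume "x \<in> {x. (f \<circ> Psi) x \<noteq> 0}"
    then have "Psi x \<in> {a. f a \<noteq> 0}" by simp
    then show "x \<in> Phi ` {a. f a \<noteq> 0}" using assms(1)[of x] by (metis image_eqI)
  next
    fix x assume "x \<in> Phi ` {a. f a \<noteq> 0}"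
    then obtain a where "x = Phi a" "f a \<noteq> 0" by blast
    then show "x \<in> {x. (f \<circ> Psi) x \<noteq> 0}" using assms(2) by simp
  qed
  have e2: "{a. f a \<noteq> 0} = Psi ` {x. (f \<circ> Psi) x \<noteq> 0}"
  proof (rule set_eqI, rule iffI)
    fix a assume "a \<in> {a. f a \<noteq> 0}"
    then have "Phi a \<in> {x. (f \<circ> Psi) x \<noteq> 0}" using assms(2) by simp
    then show "a \<in> Psi ` {x. (f \<circ> Psi) x \<noteq> 0}" using assms(2)[of a] by (metis image_eqI)
  next
    fix a assume "a \<in> Psi ` {x. (f \<circ> Psi) x \<noteq> 0}"
    then show "a \<in> {a. f a \<noteq> 0}" by auto
  qed
  show ?thesis unfolding puiseux_poly_def using e1 e2 by (metis finite_imageI)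
qed

lemma count_core:
  fixes p r q s :: nat and Phi Psi :: "complex \<times> complex \<Rightarrow> complex \<times> complex"
  assumes pp: "p > 0" and rp: "r > 0" and qp: "q > 0" and sp: "s > 0" and D: "p * s < q * r"
    and PP: "\<And>x. Phi (Psi x) = x" and PP2: "\<And>a. Psi (Phi a) = a"
  shows "cdim {f. puiseux_poly (f \<circ> Psi) \<and> Rel p r (f \<circ> Psi) \<and> Rel q s (f \<circ> Psi)} = p * s"
proof -
  let ?V = "{f. puiseux_poly (f \<circ> Psi) \<and> Rel p r (f \<circ> Psi) \<and> Rel q s (f \<circ> Psi)}"
  let ?I = "{0..<p} \<times> {0..<s}"
  define G where "G b = Gf (compo p r q s b)" for b
  note ex = exist0[OF pp rp qp sp D]
  have GPsi: "(Gf (compo p r q s b) \<circ> Phi) \<circ> Psi = Gf (compo p r q s b)" for b using PP by (simp add: fun_eq_iff)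
  have "cdim ?V = card ?I"
  proof (rule dim_by_eval[where g = "\<lambda>b. G b \<circ> Phi" and pt = "\<lambda>b. Psi (emb b)"])
    show "finite ?I" by simp
  next
    fix b assume "b \<in> ?I"
    then have b: "fst b < p" "snd b < s" by auto
    show "G b \<circ> Phi \<in> ?V" using ex(1-3)[OF b] by (simp add: G_def GPsi)
    show "(G b \<circ> Phi) (Psi (emb b)) \<noteq> 0" using ex(4)[OF b] by (simp add: PP G_def)
  next
    fix b b' assume "b \<in> ?I" "b' \<in> ?I" "b \<noteq> b'"
    then show "(G b \<circ> Phi) (Psi (emb b')) = 0" using ex(5)[of b b'] by (auto simp: PP G_def)
  next
    fix f assume "f \<in> ?V"
    then have fP: "puiseux_poly (f \<circ> Psi)" "Rel p r (f \<circ> Psi)" "Rel q s (f \<circ> Psi)" by auto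
    define F where "F = f \<circ> Psi"
    define c where "c b = F (emb b) / G b (emb b)" for b
    define K where "K x = (\<Sum>b\<in>?I. c b * G b x)" for x
    have FP: "puiseux_poly F" "Rel p r F" "Rel q s F" using fP by (simp_all add: F_def)
    have Gb: "puiseux_poly (G b)" "Rel p r (G b)" "Rel q s (G b)" if "b \<in> ?I" for b
      using ex(1-3)[of b] that by (auto simp: G_def)
    have "(\<lambda>x. F x - K x) = (\<lambda>_. 0)"
    proof (rule unique0[OF pp rp qp sp D])
      show "puiseux_poly (\<lambda>x. F x - K x)" unfolding K_def
        using FP Gb by (intro pp_diff pp_lin) auto
      show "Rel p r (\<lambda>x. F x - K x)" unfolding K_def
        using FP Gb by (intro Rel_diff Rel_lin) auto
      show "Rel q s (\<lambda>x. F x - K x)" unfolding K_def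
        using FP Gb by (intro Rel_diff Rel_lin) auto
    next
      fix u v assume uv: "u < p" "v < s"
      then have bI: "(u, v) \<in> ?I" by auto
      have "K (emb (u, v)) = c (u, v) * G (u, v) (emb (u, v)) + (\<Sum>b\<in>?I - {(u, v)}. c b * G b (emb (u, v)))"
        unfolding K_def by (rule sum.remove[OF _ bI]) simp
      also have "(\<Sum>b\<in>?I - {(u, v)}. c b * G b (emb (u, v))) = 0"
      proof (intro sum.neutral ballI)
        fix b assume "b \<in> ?I - {(u, v)}"
        then have "fst b < p" "snd b < s" "(u, v) \<noteq> b" by auto
        then have "G b (emb (u, v)) = 0" using ex(5)[of b "(u, v)"] uv by (simp add: G_def)
        then show "c b * G b (emb (u, v)) = 0" by simp
      qed
      also have "c (u, v) * G (u, v) (emb (u, v)) = F (emb (u, v))"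
        using ex(4)[of "(u, v)"] uv by (simp add: c_def G_def)
      finally show "F (emb (u, v)) - K (emb (u, v)) = 0" by simp
    qed
    then have FK: "F x = K x" for x by (metis eq_iff_diff_eq_0)
    have "f = (\<lambda>a. \<Sum>b\<in>?I. c b * (G b \<circ> Phi) a)"
    proof
      fix a
      have "f a = F (Phi a)" by (simp add: F_def PP2)
      also have "\<dots> = K (Phi a)" by (rule FK)
      finally show "f a = (\<Sum>b\<in>?I. c b * (G b \<circ> Phi) a)" by (simp add: K_def)
    qed
    then show "\<exists>c. f = (\<lambda>a. \<Sum>b\<in>?I. c b * (G b \<circ> Phi) a)" by blast
  qed
  then show ?thesis by simp
qed


definition PhiM :: "int \<times> int \<Rightarrow> int \<times> int \<Rightarrow> complex \<Rightarrow> complex \<Rightarrow> complex \<times> complex \<Rightarrow> complex \<times> complex" where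
  "PhiM bi bj ci cj a = (dotc bi a + ci, dotc bj a + cj)"

definition PsiM :: "int \<times> int \<Rightarrow> int \<times> int \<Rightarrow> complex \<Rightarrow> complex \<Rightarrow> complex \<times> complex \<Rightarrow> complex \<times> complex" where
  "PsiM bi bj ci cj x =
    ((of_int (snd bj) * (fst x - ci) - of_int (snd bi) * (snd x - cj)) /
       (of_int (fst bi) * of_int (snd bj) - of_int (snd bi) * of_int (fst bj)),
     (of_int (fst bi) * (snd x - cj) - of_int (fst bj) * (fst x - ci)) /
       (of_int (fst bi) * of_int (snd bj) - of_int (snd bi) * of_int (fst bj)))"

lemma ls1: fixes A B C E U V :: complex assumes "A * E - B * C \<noteq> 0"
  shows "A * ((E * U - B * V) / (A * E - B * C)) + B * ((A * V - C * U) / (A * E - B * C)) = U"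
proof -
  have "A * ((E * U - B * V) / (A * E - B * C)) + B * ((A * V - C * U) / (A * E - B * C))
     = (A * (E * U - B * V) + B * (A * V - C * U)) / (A * E - B * C)"
    by (simp add: add_divide_distrib)
  also have "A * (E * U - B * V) + B * (A * V - C * U) = U * (A * E - B * C)" by (simp add: algebra_simps)
  finally show ?thesis using assms by simp
qed
lemma ls2: fixes A B C E U V :: complex assumes "A * E - B * C \<noteq> 0"
  shows "C * ((E * U - B * V) / (A * E - B * C)) + E * ((A * V - C * U) / (A * E - B * C)) = V"
proof -
  have "C * ((E * U - B * V) / (A * E - B * C)) + E * ((A * V - C * U) / (A * E - B * C))
     = (C * (E * U - B * V) + E * (A * V - C * U)) / (A * E - B * C)"
    by (simp add: add_divide_distrib)
  also have "C * (E * U - B * V) + E * (A * V - C * U) = V * (A * E - B * C)" by (simp add: algebra_simps)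
  finally show ?thesis using assms by simp
qed
lemma ls3: fixes A B C E X Y :: complex assumes "A * E - B * C \<noteq> 0"
  shows "(E * (A * X + B * Y) - B * (C * X + E * Y)) / (A * E - B * C) = X"
    "(A * (C * X + E * Y) - C * (A * X + B * Y)) / (A * E - B * C) = Y"
proof -
  have "E * (A * X + B * Y) - B * (C * X + E * Y) = X * (A * E - B * C)" by (simp add: algebra_simps)
  then show "(E * (A * X + B * Y) - B * (C * X + E * Y)) / (A * E - B * C) = X" using assms by simp
  have "A * (C * X + E * Y) - C * (A * X + B * Y) = Y * (A * E - B * C)" by (simp add: algebra_simps)
  then show "(A * (C * X + E * Y) - C * (A * X + B * Y)) / (A * E - B * C) = Y" using assms by simp
qed

lemma dd_nz:
  assumes "fst bi * snd bj - snd bi * fst bj \<noteq> 0"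
  shows "(of_int (fst bi) * of_int (snd bj) - of_int (snd bi) * of_int (fst bj) :: complex) \<noteq> 0"
proof -
  have "(of_int (fst bi * snd bj - snd bi * fst bj) :: complex) \<noteq> 0" by (metis assms of_int_eq_0_iff)
  moreover have "(of_int (fst bi * snd bj - snd bi * fst bj) :: complex) = of_int (fst bi) * of_int (snd bj) - of_int (snd bi) * of_int (fst bj)"
    by simp
  ultimately show ?thesis by simp
qed

lemma Phi_Psi:
  assumes "fst bi * snd bj - snd bi * fst bj \<noteq> 0"
  shows "PhiM bi bj ci cj (PsiM bi bj ci cj x) = x"
proof -
  obtain X Y where x: "x = (X, Y)" by (cases x)
  note d = dd_nz[OF assms]
  show ?thesis
    using ls1[OF d, of "X - ci" "Y - cj"] ls2[OF d, of "X - ci" "Y - cj"]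
    by (simp add: x PhiM_def PsiM_def dotc_def)
qed

lemma Psi_Phi:
  assumes "fst bi * snd bj - snd bi * fst bj \<noteq> 0"
  shows "PsiM bi bj ci cj (PhiM bi bj ci cj a) = a"
proof -
  obtain X Y where a: "a = (X, Y)" by (cases a)
  note d = dd_nz[OF assms]
  show ?thesis
    using ls3[OF d, of X Y]
    by (simp add: a PhiM_def PsiM_def dotc_def)
qed


lemma Rel_swap:
  "(\<forall>x. ffc (snd x) m * F x = ffc (fst x + of_nat n) n * F (fst x + of_nat n, snd x - of_nat m))
   \<longleftrightarrow> Rel n m F"
  unfolding Rel_def
proof (intro iffI allI)
  fix y :: "complex \<times> complex"
  assume H: "\<forall>x. ffc (snd x) m * F x = ffc (fst x + of_nat n) n * F (fst x + of_nat n, snd x - of_nat m)"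
  from H[rule_format, of "(fst y - of_nat n, snd y + of_nat m)"]
  show "ffc (fst y) n * F y = ffc (snd y + of_nat m) m * F (fst y - of_nat n, snd y + of_nat m)"
    by simp
next
  fix x :: "complex \<times> complex"
  assume H: "\<forall>x. ffc (fst x) n * F x = ffc (snd x + of_nat m) m * F (fst x - of_nat n, snd x + of_nat m)"
  from H[rule_format, of "(fst x + of_nat n, snd x - of_nat m)"]
  show "ffc (snd x) m * F x = ffc (fst x + of_nat n) n * F (fst x + of_nat n, snd x - of_nat m)"
    by simp
qed

lemma col_rel:
  assumes det: "fst bi * snd bj - snd bi * fst bj \<noteq> 0" and r12: "r = 1 \<or> r = 2"
    and sg: "col r bi * col r bj < 0"
  shows "H_op [bi, bj] [ci, cj] r f = (\<lambda>_. 0) \<longleftrightarrow>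
         Rel (nat \<bar>col r bi\<bar>) (nat \<bar>col r bj\<bar>) (f \<circ> PsiM bi bj ci cj)"
proof -
  define Phi where "Phi = PhiM bi bj ci cj"
  define Psi where "Psi = PsiM bi bj ci cj"
  define F where "F = f \<circ> Psi"
  have PP: "Phi (Psi x) = x" for x using Phi_Psi[OF det] by (simp add: Phi_def Psi_def)
  have PP2: "Psi (Phi a) = a" for a using Psi_Phi[OF det] by (simp add: Phi_def Psi_def)
  have fF: "f a = F (Phi a)" for a by (simp add: F_def PP2)
  have allPhi: "(\<forall>a. P (Phi a)) \<longleftrightarrow> (\<forall>x. P x)" for P
  proof
    assume H: "\<forall>a. P (Phi a)"
    show "\<forall>x. P x"
    proof
      fix x
      have "P (Phi (Psi x))" using H by blast
      then show "P x" by (simp only: PP)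
    qed
  qed blast
  have Phish: "Phi (sh r a) = (fst (Phi a) - of_int (col r bi), snd (Phi a) - of_int (col r bj))" for a
    using dotc_sh[OF r12] by (simp add: Phi_def PhiM_def)
  have fPhi: "fst (Phi a) = dotc bi a + ci" "snd (Phi a) = dotc bj a + cj" for a
    by (simp_all add: Phi_def PhiM_def)
  consider "col r bi > 0" "col r bj < 0" | "col r bi < 0" "col r bj > 0"
    using sg mult_less_0_iff by blast
  then show ?thesis
  proof cases
    case 1
    define m where "m = nat (col r bi)"
    define n where "n = nat (- col r bj)"
    have mm: "(of_nat m :: complex) = of_int (col r bi)" using 1 by (simp add: m_def)
    have nn: "(of_nat n :: complex) = - of_int (col r bj)" using 1 by (simp add: n_def)
    have "H_op [bi, bj] [ci, cj] r f = (\<lambda>_. 0) \<longleftrightarrow>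
      (\<forall>a. ffc (fst (Phi a)) m * F (Phi a) = ffc (snd (Phi a) + of_nat n) n * F (fst (Phi a) - of_nat m, snd (Phi a) + of_nat n))"
    proof -
      have "Q_op [bi, bj] [ci, cj] r f a = ffc (fst (Phi a)) m * F (Phi a)" for a
        using QP_A(1)[OF 1, of ci cj f] by (simp add: fPhi fF m_def)
      moreover have "P_op [bi, bj] [ci, cj] r f (sh r a) = ffc (snd (Phi a) + of_nat n) n * F (fst (Phi a) - of_nat m, snd (Phi a) + of_nat n)" for a
      proof -
        have "P_op [bi, bj] [ci, cj] r f (sh r a) = ffc (dotc bj (sh r a) + cj) n * f (sh r a)"
          using QP_A(2)[OF 1, of ci cj f] by (simp add: n_def)
        also have "dotc bj (sh r a) + cj = snd (Phi a) + of_nat n"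
          using dotc_sh[OF r12] by (simp add: fPhi nn)
        also have "f (sh r a) = F (fst (Phi a) - of_nat m, snd (Phi a) + of_nat n)"
          by (simp add: fF Phish mm nn)
        finally show ?thesis .
      qed
      ultimately show ?thesis by (simp add: H_zero_iff)
    qed
    also have "\<dots> \<longleftrightarrow> Rel m n F" unfolding Rel_def by (rule allPhi)
    finally show ?thesis using 1 by (simp add: F_def Psi_def m_def n_def)
  next
    case 2
    define m where "m = nat (col r bj)"
    define n where "n = nat (- col r bi)"
    have mm: "(of_nat m :: complex) = of_int (col r bj)" using 2 by (simp add: m_def)
    have nn: "(of_nat n :: complex) = - of_int (col r bi)" using 2 by (simp add: n_def)
    have "H_op [bi, bj] [ci, cj] r f = (\<lambda>_. 0) \<longleftrightarrow>
      (\<forall>a. ffc (snd (Phi a)) m * F (Phi a) = ffc (fst (Phi a) + of_nat n) n * F (fst (Phi a) + of_nat n, snd (Phi a) - of_nat m))"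
    proof -
      have "Q_op [bi, bj] [ci, cj] r f a = ffc (snd (Phi a)) m * F (Phi a)" for a
        using QP_B(1)[OF 2, of ci cj f] by (simp add: fPhi fF m_def)
      moreover have "P_op [bi, bj] [ci, cj] r f (sh r a) = ffc (fst (Phi a) + of_nat n) n * F (fst (Phi a) + of_nat n, snd (Phi a) - of_nat m)" for a
      proof -
        have "P_op [bi, bj] [ci, cj] r f (sh r a) = ffc (dotc bi (sh r a) + ci) n * f (sh r a)"
          using QP_B(2)[OF 2, of ci cj f] by (simp add: n_def)
        also have "dotc bi (sh r a) + ci = fst (Phi a) + of_nat n"
          using dotc_sh[OF r12] by (simp add: fPhi nn)
        also have "f (sh r a) = F (fst (Phi a) + of_nat n, snd (Phi a) - of_nat m)"
          by (simp add: fF Phish mm nn)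
        finally show ?thesis .
      qed
      ultimately show ?thesis by (simp add: H_zero_iff)
    qed
    also have "\<dots> \<longleftrightarrow> (\<forall>x. ffc (snd x) m * F x = ffc (fst x + of_nat n) n * F (fst x + of_nat n, snd x - of_nat m))"
      by (rule allPhi)
    also have "\<dots> \<longleftrightarrow> Rel n m F" by (rule Rel_swap)
    finally show ?thesis using 2 by (simp add: F_def Psi_def m_def n_def)
  qed
qed


theorem lemma6p5:
  fixes bi bj :: "int \<times> int" and ci cj :: complex
  assumes indep: "fst bi * snd bj - snd bi * fst bj \<noteq> 0"
    and opposite: "fst bi * fst bj < 0" "snd bi * snd bj < 0"
  shows "cdim (horn_puiseux_solutions [bi, bj] [ci, cj])
           = nat (min \<bar>fst bi * snd bj\<bar> \<bar>snd bi * fst bj\<bar>)"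
proof -
  define Psi where "Psi = PsiM bi bj ci cj"
  define Phi where "Phi = PhiM bi bj ci cj"
  define p where "p = nat \<bar>fst bi\<bar>"
  define r where "r = nat \<bar>fst bj\<bar>"
  define q where "q = nat \<bar>snd bi\<bar>"
  define s where "s = nat \<bar>snd bj\<bar>"
  have PP: "Phi (Psi x) = x" for x using Phi_Psi[OF indep] by (simp add: Phi_def Psi_def)
  have PP2: "Psi (Phi a) = a" for a using Psi_Phi[OF indep] by (simp add: Phi_def Psi_def)
  have nz: "fst bi \<noteq> 0" "fst bj \<noteq> 0" "snd bi \<noteq> 0" "snd bj \<noteq> 0" using opposite by auto
  have pos: "p > 0" "r > 0" "q > 0" "s > 0" using nz by (auto simp: p_def r_def q_def s_def)
  have c1: "H_op [bi, bj] [ci, cj] 1 f = (\<lambda>_. 0) \<longleftrightarrow> Rel p r (f \<circ> Psi)" for f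
    using col_rel[OF indep, of 1 ci cj f] opposite by (simp add: col_def p_def r_def Psi_def)
  have c2: "H_op [bi, bj] [ci, cj] 2 f = (\<lambda>_. 0) \<longleftrightarrow> Rel q s (f \<circ> Psi)" for f
    using col_rel[OF indep, of 2 ci cj f] opposite by (simp add: col_def q_def s_def Psi_def)
  have V: "horn_puiseux_solutions [bi, bj] [ci, cj] = {f. puiseux_poly (f \<circ> Psi) \<and> Rel p r (f \<circ> Psi) \<and> Rel q s (f \<circ> Psi)}"
    unfolding horn_puiseux_solutions_def using c1 c2 pp_comp[of Phi Psi, OF PP PP2] by auto
  have V': "horn_puiseux_solutions [bi, bj] [ci, cj] = {f. puiseux_poly (f \<circ> Psi) \<and> Rel q s (f \<circ> Psi) \<and> Rel p r (f \<circ> Psi)}"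
    unfolding V by auto
  have ps: "int (p * s) = \<bar>fst bi * snd bj\<bar>" by (simp add: p_def s_def abs_mult)
  have qr: "int (q * r) = \<bar>snd bi * fst bj\<bar>" by (simp add: q_def r_def abs_mult)
  have "p * s \<noteq> q * r"
  proof
    assume "p * s = q * r"
    then have ab: "\<bar>fst bi * snd bj\<bar> = \<bar>snd bi * fst bj\<bar>" using ps qr by simp
    have prodpos: "(fst bi * snd bj) * (snd bi * fst bj) > 0"
    proof -
      have "(fst bi * snd bj) * (snd bi * fst bj) = (fst bi * fst bj) * (snd bi * snd bj)" by (simp add: algebra_simps)
      also have "\<dots> > 0" using opposite by (simp add: mult_neg_neg)
      finally show ?thesis .
    qed
    from ab consider "fst bi * snd bj = snd bi * fst bj" | "fst bi * snd bj = - (snd bi * fst bj)"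
      by (metis abs_eq_iff)
    then show False
    proof cases
      case 1 then show False using indep by simp
    next
      case 2
      then have "(fst bi * snd bj) * (snd bi * fst bj) = - ((snd bi * fst bj) * (snd bi * fst bj))" by simp
      moreover have "(snd bi * fst bj) * (snd bi * fst bj) \<ge> 0" by simp
      ultimately show False using prodpos by linarith
    qed
  qed
  then consider "p * s < q * r" | "q * r < p * s" by linarith
  then show ?thesis
  proof cases
    case 1
    have "cdim (horn_puiseux_solutions [bi, bj] [ci, cj]) = p * s"
      unfolding V by (rule count_core[OF pos(1,2,3,4) 1 PP PP2])
    moreover have "nat (min \<bar>fst bi * snd bj\<bar> \<bar>snd bi * fst bj\<bar>) = p * s"
      using 1 ps qr by linarith
    ultimately show ?thesis by simp
  next
    case 2
    have "cdim (horn_puiseux_solutions [bi, bj] [ci, cj]) = q * r"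
      unfolding V' by (rule count_core[OF pos(3,4,1,2) 2 PP PP2])
    moreover have "nat (min \<bar>fst bi * snd bj\<bar> \<bar>snd bi * fst bj\<bar>) = q * r"
      using 2 ps qr by linarith
    ultimately show ?thesis by simp
  qed
qed

end
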